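(* Let $k$ be an algebraically closed field and $G$ a finite abelian group whose order is invertible in $k$. For any finite-dimensional $k$-algebra $\Lambda$ with a $G$-action, there is an isomorphism of algebras $\mathrm{Triv}(\Lambda G)\simeq\mathrm{Triv}(\Lambda)G$.
   Context: A $G$-action on $\Lambda$ is a left action by algebra automorphisms. The skew group algebra $\Lambda G$ is $\Lambda\otimes_k kG$ with multiplication $(\lambda\otimes g)(\mu\otimes h)=\lambda(g\cdot\mu)\otimes gh$. For an algebra $A$, $DA=\mathrm{Hom}_k(A,k)$ with its natural $A$-$A$-bimodule structure, and the trivial extension is $\mathrm{Triv}(A)=A\oplus DA$ with $(a,\phi)(b,\psi)=(ab,a\psi+\phi b)$. $G$ acts on $D\Lambda$ by $(g\cdot\phi)(b)=\phi(g^{-1}\cdot b)$ and on $\mathrm{Triv}(\Lambda)$ by $g\cdot(a,\phi)=(g\cdot a,g\cdot\phi)$; this is an action by algebra automorphisms, so $\mathrm{Triv}(\Lambda)G$ is defined. *)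

theory Defs
  imports "HOL-Algebra.Algebraic_Closure" "HOL-Algebra.Module"
begin

definition k_algebra :: "'k ring \<Rightarrow> ('k, 'a) module \<Rightarrow> bool" where
  "k_algebra K A \<longleftrightarrow> field K \<and> module K A \<and> ring A \<and>
     (\<forall>c\<in>carrier K. \<forall>x\<in>carrier A. \<forall>y\<in>carrier A.
        (c \<odot>\<^bsub>A\<^esub> x) \<otimes>\<^bsub>A\<^esub> y = c \<odot>\<^bsub>A\<^esub> (x \<otimes>\<^bsub>A\<^esub> y) \<and>
        x \<otimes>\<^bsub>A\<^esub> (c \<odot>\<^bsub>A\<^esub> y) = c \<odot>\<^bsub>A\<^esub> (x \<otimes>\<^bsub>A\<^esub> y))"

definition fin_dim :: "'k ring \<Rightarrow> ('k, 'a) module \<Rightarrow> bool" where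
  "fin_dim K A \<longleftrightarrow> (\<exists>S. finite S \<and> S \<subseteq> carrier A \<and>
     (\<forall>x\<in>carrier A. \<exists>c\<in>S \<rightarrow> carrier K. x = finsum A (\<lambda>s. c s \<odot>\<^bsub>A\<^esub> s) S))"

definition alg_iso :: "'k ring \<Rightarrow> ('k, 'a) module \<Rightarrow> ('k, 'b) module \<Rightarrow> ('a \<Rightarrow> 'b) \<Rightarrow> bool" where
  "alg_iso K A B f \<longleftrightarrow> f \<in> ring_iso A B \<and>
     (\<forall>c\<in>carrier K. \<forall>x\<in>carrier A. f (c \<odot>\<^bsub>A\<^esub> x) = c \<odot>\<^bsub>B\<^esub> f x)"

definition alg_isomorphic :: "'k ring \<Rightarrow> ('k, 'a) module \<Rightarrow> ('k, 'b) module \<Rightarrow> bool" where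
  "alg_isomorphic K A B \<longleftrightarrow> (\<exists>f. alg_iso K A B f)"

definition alg_action :: "'k ring \<Rightarrow> 'g monoid \<Rightarrow> ('k, 'a) module \<Rightarrow> ('g \<Rightarrow> 'a \<Rightarrow> 'a) \<Rightarrow> bool" where
  "alg_action K G A act \<longleftrightarrow>
     (\<forall>g\<in>carrier G. alg_iso K A A (act g)) \<and>
     (\<forall>x\<in>carrier A. act \<one>\<^bsub>G\<^esub> x = x) \<and>
     (\<forall>g\<in>carrier G. \<forall>h\<in>carrier G. \<forall>x\<in>carrier A.
        act (g \<otimes>\<^bsub>G\<^esub> h) x = act g (act h x))"

text \<open>Skew group algebra A G = A \<otimes>_k kG, realised as maps G \<rightarrow> A
  (the element \<Sum>_g a_g \<otimes> g corresponds to g \<mapsto> a_g), with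
  (\<lambda>\<otimes>g)(\<mu>\<otimes>h) = \<lambda>(g\<cdot>\<mu>)\<otimes>gh.\<close>
definition skew_group_alg :: "'g monoid \<Rightarrow> ('k, 'a) module \<Rightarrow> ('g \<Rightarrow> 'a \<Rightarrow> 'a) \<Rightarrow> ('k, 'g \<Rightarrow> 'a) module" where
  "skew_group_alg G A act =
     \<lparr> partial_object.carrier = carrier G \<rightarrow>\<^sub>E carrier A,
       monoid.mult = (\<lambda>u v. \<lambda>x\<in>carrier G.
                 finsum A (\<lambda>g. u g \<otimes>\<^bsub>A\<^esub> act g (v (inv\<^bsub>G\<^esub> g \<otimes>\<^bsub>G\<^esub> x))) (carrier G)),
       monoid.one = (\<lambda>x\<in>carrier G. if x = \<one>\<^bsub>G\<^esub> then \<one>\<^bsub>A\<^esub> else \<zero>\<^bsub>A\<^esub>),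
       ring.zero = (\<lambda>x\<in>carrier G. \<zero>\<^bsub>A\<^esub>),
       ring.add = (\<lambda>u v. \<lambda>x\<in>carrier G. u x \<oplus>\<^bsub>A\<^esub> v x),
       module.smult = (\<lambda>c u. \<lambda>x\<in>carrier G. c \<odot>\<^bsub>A\<^esub> u x) \<rparr>"

definition lin_dual :: "'k ring \<Rightarrow> ('k, 'a) module \<Rightarrow> ('a \<Rightarrow> 'k) set" where
  "lin_dual K A = {\<phi> \<in> carrier A \<rightarrow>\<^sub>E carrier K.
      (\<forall>x\<in>carrier A. \<forall>y\<in>carrier A. \<phi> (x \<oplus>\<^bsub>A\<^esub> y) = \<phi> x \<oplus>\<^bsub>K\<^esub> \<phi> y) \<and>
      (\<forall>c\<in>carrier K. \<forall>x\<in>carrier A. \<phi> (c \<odot>\<^bsub>A\<^esub> x) = c \<otimes>\<^bsub>K\<^esub> \<phi> x)}"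

text \<open>Trivial extension Triv(A) = A \<oplus> DA with (a,\<phi>)(b,\<psi>) = (ab, a\<psi> + \<phi>b), where
  (a\<psi>)(c) = \<psi>(ca) and (\<phi>b)(c) = \<phi>(bc).\<close>
definition triv_ext :: "'k ring \<Rightarrow> ('k, 'a) module \<Rightarrow> ('k, 'a \<times> ('a \<Rightarrow> 'k)) module" where
  "triv_ext K A =
     \<lparr> partial_object.carrier = carrier A \<times> lin_dual K A,
       monoid.mult = (\<lambda>(a, \<phi>) (b, \<psi>). (a \<otimes>\<^bsub>A\<^esub> b,
                 \<lambda>c\<in>carrier A. \<psi> (c \<otimes>\<^bsub>A\<^esub> a) \<oplus>\<^bsub>K\<^esub> \<phi> (b \<otimes>\<^bsub>A\<^esub> c))),
       monoid.one = (\<one>\<^bsub>A\<^esub>, \<lambda>c\<in>carrier A. \<zero>\<^bsub>K\<^esub>),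
       ring.zero = (\<zero>\<^bsub>A\<^esub>, \<lambda>c\<in>carrier A. \<zero>\<^bsub>K\<^esub>),
       ring.add = (\<lambda>(a, \<phi>) (b, \<psi>). (a \<oplus>\<^bsub>A\<^esub> b, \<lambda>c\<in>carrier A. \<phi> c \<oplus>\<^bsub>K\<^esub> \<psi> c)),
       module.smult = (\<lambda>t (a, \<phi>). (t \<odot>\<^bsub>A\<^esub> a, \<lambda>c\<in>carrier A. t \<otimes>\<^bsub>K\<^esub> \<phi> c)) \<rparr>"

definition triv_action :: "'g monoid \<Rightarrow> ('k, 'a) module \<Rightarrow> ('g \<Rightarrow> 'a \<Rightarrow> 'a)
    \<Rightarrow> 'g \<Rightarrow> 'a \<times> ('a \<Rightarrow> 'k) \<Rightarrow> 'a \<times> ('a \<Rightarrow> 'k)" where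
  "triv_action G A act g = (\<lambda>(a, \<phi>). (act g a, \<lambda>b\<in>carrier A. \<phi> (act (inv\<^bsub>G\<^esub> g) b)))"

end

theory Submission
  imports Defs
begin



locale tsetup = K: field K + L: module K L + LR: ring L + G: group G
  for K :: "'k ring" and L :: "('k,'a) module" and G :: "'g monoid" +
  fixes act :: "'g \<Rightarrow> 'a \<Rightarrow> 'a"
  assumes finG: "finite (carrier G)"
  and bil: "\<And>c x y. c\<in>carrier K \<Longrightarrow> x\<in>carrier L \<Longrightarrow> y\<in>carrier L \<Longrightarrow>
        (c \<odot>\<^bsub>L\<^esub> x) \<otimes>\<^bsub>L\<^esub> y = c \<odot>\<^bsub>L\<^esub> (x \<otimes>\<^bsub>L\<^esub> y)"
  and bil2: "\<And>c x y. c\<in>carrier K \<Longrightarrow> x\<in>carrier L \<Longrightarrow> y\<in>carrier L \<Longrightarrow>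
        x \<otimes>\<^bsub>L\<^esub> (c \<odot>\<^bsub>L\<^esub> y) = c \<odot>\<^bsub>L\<^esub> (x \<otimes>\<^bsub>L\<^esub> y)"
  and actn: "alg_action K G L act"
begin

lemma act_closed[simp]: "g \<in> carrier G \<Longrightarrow> a \<in> carrier L \<Longrightarrow> act g a \<in> carrier L"
  using actn unfolding alg_action_def alg_iso_def ring_iso_def ring_hom_def by blast

lemma act_add[simp]: "g \<in> carrier G \<Longrightarrow> a \<in> carrier L \<Longrightarrow> b \<in> carrier L \<Longrightarrow>
   act g (a \<oplus>\<^bsub>L\<^esub> b) = act g a \<oplus>\<^bsub>L\<^esub> act g b"
  using actn unfolding alg_action_def alg_iso_def ring_iso_def ring_hom_def by blast

lemma act_mult[simp]: "g \<in> carrier G \<Longrightarrow> a \<in> carrier L \<Longrightarrow> b \<in> carrier L \<Longrightarrow>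
   act g (a \<otimes>\<^bsub>L\<^esub> b) = act g a \<otimes>\<^bsub>L\<^esub> act g b"
  using actn unfolding alg_action_def alg_iso_def ring_iso_def ring_hom_def by blast

lemma act_smult[simp]: "g \<in> carrier G \<Longrightarrow> c \<in> carrier K \<Longrightarrow> b \<in> carrier L \<Longrightarrow>
   act g (c \<odot>\<^bsub>L\<^esub> b) = c \<odot>\<^bsub>L\<^esub> act g b"
  using actn unfolding alg_action_def alg_iso_def by blast

lemma act_zero[simp]: "g \<in> carrier G \<Longrightarrow> act g \<zero>\<^bsub>L\<^esub> = \<zero>\<^bsub>L\<^esub>"
proof -
  assume g: "g \<in> carrier G"
  have "act g \<zero>\<^bsub>L\<^esub> = act g (\<zero>\<^bsub>K\<^esub> \<odot>\<^bsub>L\<^esub> \<zero>\<^bsub>L\<^esub>)" by simp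
  also have "\<dots> = \<zero>\<^bsub>K\<^esub> \<odot>\<^bsub>L\<^esub> act g \<zero>\<^bsub>L\<^esub>" using g by (intro act_smult) auto
  also have "\<dots> = \<zero>\<^bsub>L\<^esub>" using g by simp
  finally show ?thesis .
qed

lemma act_comp: "g \<in> carrier G \<Longrightarrow> h \<in> carrier G \<Longrightarrow> a \<in> carrier L \<Longrightarrow>
   act (g \<otimes>\<^bsub>G\<^esub> h) a = act g (act h a)"
  using actn unfolding alg_action_def by blast

lemma act_one[simp]: "a \<in> carrier L \<Longrightarrow> act \<one>\<^bsub>G\<^esub> a = a"
  using actn unfolding alg_action_def by blast

lemma act_inv1[simp]: "g \<in> carrier G \<Longrightarrow> a \<in> carrier L \<Longrightarrow> act (inv\<^bsub>G\<^esub> g) (act g a) = a"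
  by (metis G.inv_closed G.l_inv act_comp act_one)

lemma act_inv2[simp]: "g \<in> carrier G \<Longrightarrow> a \<in> carrier L \<Longrightarrow> act g (act (inv\<^bsub>G\<^esub> g) a) = a"
  by (metis G.inv_closed G.r_inv act_comp act_one)

abbreviation "S \<equiv> skew_group_alg G L act"
abbreviation "T \<equiv> triv_ext K L"
abbreviation "TS \<equiv> triv_ext K S"
abbreviation "tact \<equiv> triv_action G L act"
abbreviation "ST \<equiv> skew_group_alg G T tact"

lemma S_carrier[simp]: "carrier S = carrier G \<rightarrow>\<^sub>E carrier L"
  by (simp add: skew_group_alg_def)

lemma S_simps:
  "u \<otimes>\<^bsub>S\<^esub> v = (\<lambda>x\<in>carrier G.
                 finsum L (\<lambda>g. u g \<otimes>\<^bsub>L\<^esub> act g (v (inv\<^bsub>G\<^esub> g \<otimes>\<^bsub>G\<^esub> x))) (carrier G))"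
  "\<one>\<^bsub>S\<^esub> = (\<lambda>x\<in>carrier G. if x = \<one>\<^bsub>G\<^esub> then \<one>\<^bsub>L\<^esub> else \<zero>\<^bsub>L\<^esub>)"
  "\<zero>\<^bsub>S\<^esub> = (\<lambda>x\<in>carrier G. \<zero>\<^bsub>L\<^esub>)"
  "u \<oplus>\<^bsub>S\<^esub> v = (\<lambda>x\<in>carrier G. u x \<oplus>\<^bsub>L\<^esub> v x)"
  "c \<odot>\<^bsub>S\<^esub> u = (\<lambda>x\<in>carrier G. c \<odot>\<^bsub>L\<^esub> u x)"
  by (simp_all add: skew_group_alg_def)

lemma ST_simps[simp]:
  "carrier ST = carrier G \<rightarrow>\<^sub>E carrier T"
  "u \<otimes>\<^bsub>ST\<^esub> v = (\<lambda>x\<in>carrier G.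
                 finsum T (\<lambda>g. u g \<otimes>\<^bsub>T\<^esub> tact g (v (inv\<^bsub>G\<^esub> g \<otimes>\<^bsub>G\<^esub> x))) (carrier G))"
  "\<one>\<^bsub>ST\<^esub> = (\<lambda>x\<in>carrier G. if x = \<one>\<^bsub>G\<^esub> then \<one>\<^bsub>T\<^esub> else \<zero>\<^bsub>T\<^esub>)"
  "\<zero>\<^bsub>ST\<^esub> = (\<lambda>x\<in>carrier G. \<zero>\<^bsub>T\<^esub>)"
  "u \<oplus>\<^bsub>ST\<^esub> v = (\<lambda>x\<in>carrier G. u x \<oplus>\<^bsub>T\<^esub> v x)"
  "c \<odot>\<^bsub>ST\<^esub> u = (\<lambda>x\<in>carrier G. c \<odot>\<^bsub>T\<^esub> u x)"
  by (simp_all add: skew_group_alg_def)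

lemma triv_simps[simp]:
  "carrier (triv_ext K A) = carrier A \<times> lin_dual K A"
  "(a, \<phi>) \<otimes>\<^bsub>triv_ext K A\<^esub> (b, \<psi>) = (a \<otimes>\<^bsub>A\<^esub> b,
                 \<lambda>c\<in>carrier A. \<psi> (c \<otimes>\<^bsub>A\<^esub> a) \<oplus>\<^bsub>K\<^esub> \<phi> (b \<otimes>\<^bsub>A\<^esub> c))"
  "\<one>\<^bsub>triv_ext K A\<^esub> = (\<one>\<^bsub>A\<^esub>, \<lambda>c\<in>carrier A. \<zero>\<^bsub>K\<^esub>)"
  "\<zero>\<^bsub>triv_ext K A\<^esub> = (\<zero>\<^bsub>A\<^esub>, \<lambda>c\<in>carrier A. \<zero>\<^bsub>K\<^esub>)"
  "(a, \<phi>) \<oplus>\<^bsub>triv_ext K A\<^esub> (b, \<psi>) = (a \<oplus>\<^bsub>A\<^esub> b, \<lambda>c\<in>carrier A. \<phi> c \<oplus>\<^bsub>K\<^esub> \<psi> c)"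
  "t \<odot>\<^bsub>triv_ext K A\<^esub> (a, \<phi>) = (t \<odot>\<^bsub>A\<^esub> a, \<lambda>c\<in>carrier A. t \<otimes>\<^bsub>K\<^esub> \<phi> c)"
  by (simp_all add: triv_ext_def)

lemma tact_simp[simp]: "tact g (a, \<phi>) = (act g a, \<lambda>b\<in>carrier L. \<phi> (act (inv\<^bsub>G\<^esub> g) b))"
  by (simp add: triv_action_def)

end


declare restrict_cong[cong]

lemma ldD:
  assumes "\<phi> \<in> lin_dual K A"
  shows "x \<in> carrier A \<Longrightarrow> \<phi> x \<in> carrier K"
    and "x \<in> carrier A \<Longrightarrow> y \<in> carrier A \<Longrightarrow> \<phi> (x \<oplus>\<^bsub>A\<^esub> y) = \<phi> x \<oplus>\<^bsub>K\<^esub> \<phi> y"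
    and "c \<in> carrier K \<Longrightarrow> x \<in> carrier A \<Longrightarrow> \<phi> (c \<odot>\<^bsub>A\<^esub> x) = c \<otimes>\<^bsub>K\<^esub> \<phi> x"
    and "(\<lambda>x\<in>carrier A. \<phi> x) = \<phi>"
  using assms unfolding lin_dual_def by (auto simp: PiE_def extensional_restrict)

context tsetup begin

lemma ld_closed[simp]: "\<phi> \<in> lin_dual K A \<Longrightarrow> x \<in> carrier A \<Longrightarrow> \<phi> x \<in> carrier K"
  by (rule ldD)
lemma ld_restr[simp]: "\<phi> \<in> lin_dual K A \<Longrightarrow> (\<lambda>x\<in>carrier A. \<phi> x) = \<phi>"
  by (rule ldD)

lemma ldI:
  assumes "\<And>x. x \<in> carrier A \<Longrightarrow> \<phi> x \<in> carrier K" "\<phi> \<in> extensional (carrier A)"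
    "\<And>x y. x \<in> carrier A \<Longrightarrow> y \<in> carrier A \<Longrightarrow> \<phi> (x \<oplus>\<^bsub>A\<^esub> y) = \<phi> x \<oplus>\<^bsub>K\<^esub> \<phi> y"
    "\<And>c x. c \<in> carrier K \<Longrightarrow> x \<in> carrier A \<Longrightarrow> \<phi> (c \<odot>\<^bsub>A\<^esub> x) = c \<otimes>\<^bsub>K\<^esub> \<phi> x"
  shows "\<phi> \<in> lin_dual K A"
  using assms unfolding lin_dual_def by (auto simp: extensional_def PiE_def)

lemma ld_add_closed:
  assumes "\<phi> \<in> lin_dual K L" "\<psi> \<in> lin_dual K L"
  shows "(\<lambda>c\<in>carrier L. \<phi> c \<oplus>\<^bsub>K\<^esub> \<psi> c) \<in> lin_dual K L"
  apply (rule ldI)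
  using assms by (auto simp: ldD[OF assms(1)] ldD[OF assms(2)] K.a_ac K.r_distr)

lemma ld_zero_closed: "(\<lambda>c\<in>carrier L. \<zero>\<^bsub>K\<^esub>) \<in> lin_dual K L"
  unfolding lin_dual_def by auto

lemma ld_smult_closed:
  assumes "\<phi> \<in> lin_dual K L" "t \<in> carrier K"
  shows "(\<lambda>c\<in>carrier L. t \<otimes>\<^bsub>K\<^esub> \<phi> c) \<in> lin_dual K L"
  apply (rule ldI)
  using assms by (auto simp: ldD[OF assms(1)] K.m_lcomm K.r_distr)

lemma ld_mult_closed:
  assumes "\<phi> \<in> lin_dual K L" "\<psi> \<in> lin_dual K L" "a \<in> carrier L" "b \<in> carrier L"
  shows "(\<lambda>c\<in>carrier L. \<psi> (c \<otimes>\<^bsub>L\<^esub> a) \<oplus>\<^bsub>K\<^esub> \<phi> (b \<otimes>\<^bsub>L\<^esub> c)) \<in> lin_dual K L"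
  apply (rule ldI)
  using assms by (auto simp: ldD[OF assms(1)] ldD[OF assms(2)] LR.l_distr LR.r_distr bil bil2 K.a_ac K.r_distr)

lemma ld_tact_closed:
  assumes "\<phi> \<in> lin_dual K L" "g \<in> carrier G"
  shows "(\<lambda>b\<in>carrier L. \<phi> (act (inv\<^bsub>G\<^esub> g) b)) \<in> lin_dual K L"
  apply (rule ldI)
  using assms by (auto simp: ldD[OF assms(1)])

lemma T_add_closed: "x \<in> carrier T \<Longrightarrow> y \<in> carrier T \<Longrightarrow> x \<oplus>\<^bsub>T\<^esub> y \<in> carrier T"
  by (auto simp: ld_add_closed)

lemma T_mult_closed: "x \<in> carrier T \<Longrightarrow> y \<in> carrier T \<Longrightarrow> x \<otimes>\<^bsub>T\<^esub> y \<in> carrier T"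
  by (auto simp: ld_mult_closed)

lemma tact_closed: "g \<in> carrier G \<Longrightarrow> x \<in> carrier T \<Longrightarrow> tact g x \<in> carrier T"
  by (auto simp: ld_tact_closed)

lemma T_abelian_monoid: "abelian_monoid T"
proof (rule abelian_monoidI)
  show "x \<oplus>\<^bsub>T\<^esub> y \<in> carrier T" if "x \<in> carrier T" "y \<in> carrier T" for x y
    using that by (rule T_add_closed)
  show "\<zero>\<^bsub>T\<^esub> \<in> carrier T" using ld_zero_closed by simp
  show "(x \<oplus>\<^bsub>T\<^esub> y) \<oplus>\<^bsub>T\<^esub> z = x \<oplus>\<^bsub>T\<^esub> (y \<oplus>\<^bsub>T\<^esub> z)"
    if "x \<in> carrier T" "y \<in> carrier T" "z \<in> carrier T" for x y z
    using that by (auto simp: L.a_assoc K.a_assoc)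
  show "\<zero>\<^bsub>T\<^esub> \<oplus>\<^bsub>T\<^esub> x = x" if "x \<in> carrier T" for x
    using that by auto
  show "x \<oplus>\<^bsub>T\<^esub> y = y \<oplus>\<^bsub>T\<^esub> x" if "x \<in> carrier T" "y \<in> carrier T" for x y
    using that by (auto simp: L.a_comm K.a_comm)
qed

lemma finsum_T:
  assumes "finite A" "f \<in> A \<rightarrow> carrier T"
  shows "finsum T f A = (finsum L (\<lambda>g. fst (f g)) A,
            \<lambda>c\<in>carrier L. finsum K (\<lambda>g. snd (f g) c) A)"
  using assms
proof (induction A rule: finite_induct)
  case empty
  interpret TA: abelian_monoid T by (rule T_abelian_monoid)
  show ?case by (simp add: restrict_def)
next
  case (insert a A)
  interpret TA: abelian_monoid T by (rule T_abelian_monoid)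
  have fa: "f a \<in> carrier T" and fA: "f \<in> A \<rightarrow> carrier T" using insert by auto
  obtain a0 \<phi>0 where a0: "f a = (a0, \<phi>0)" by (cases "f a")
  have fstc: "(\<lambda>g. fst (f g)) \<in> A \<rightarrow> carrier L" using fA by (auto simp: Pi_def mem_Times_iff)
  have sndc: "\<And>c. c \<in> carrier L \<Longrightarrow> (\<lambda>g. snd (f g) c) \<in> A \<rightarrow> carrier K"
    using fA by (auto simp: Pi_def mem_Times_iff)
  have "finsum T f (insert a A) = f a \<oplus>\<^bsub>T\<^esub> finsum T f A"
    using insert fa fA by (simp add: TA.finsum_insert)
  also have "\<dots> = (a0, \<phi>0) \<oplus>\<^bsub>T\<^esub> (finsum L (\<lambda>g. fst (f g)) A,
            \<lambda>c\<in>carrier L. finsum K (\<lambda>g. snd (f g) c) A)"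
    using insert fA a0 by simp
  also have "\<dots> = (finsum L (\<lambda>g. fst (f g)) (insert a A),
            \<lambda>c\<in>carrier L. finsum K (\<lambda>g. snd (f g) c) (insert a A))"
    using insert fa fA a0 fstc sndc by (auto simp: L.finsum_insert K.finsum_insert mem_Times_iff)
  finally show ?case .
qed

end



lemma (in abelian_monoid) finsum_single_swap:
  assumes "i \<in> A" "finite A" "f \<in> A \<rightarrow> carrier G"
  shows "finsum G (\<lambda>j. if j = i then f j else \<zero>) A = f i"
  using finsum_singleton[OF assms] by (simp add: eq_commute)

context tsetup begin

definition e :: "'g \<Rightarrow> 'a \<Rightarrow> 'g \<Rightarrow> 'a" where
  "e h d = (\<lambda>y\<in>carrier G. if y = h then d else \<zero>\<^bsub>L\<^esub>)"

definition theta :: "(('g \<Rightarrow> 'a) \<Rightarrow> 'k) \<Rightarrow> 'g \<Rightarrow> 'a \<Rightarrow> 'k" where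
  "theta \<Phi> = (\<lambda>x\<in>carrier G. \<lambda>c\<in>carrier L. \<Phi> (e (inv\<^bsub>G\<^esub> x) (act (inv\<^bsub>G\<^esub> x) c)))"

lemma e_carrier[simp]: "d \<in> carrier L \<Longrightarrow> e h d \<in> carrier G \<rightarrow>\<^sub>E carrier L"
  unfolding e_def by auto

lemma e_app: "y \<in> carrier G \<Longrightarrow> e h d y = (if y = h then d else \<zero>\<^bsub>L\<^esub>)"
  unfolding e_def by auto

lemma e_add: "d1 \<in> carrier L \<Longrightarrow> d2 \<in> carrier L \<Longrightarrow> e h (d1 \<oplus>\<^bsub>L\<^esub> d2) = e h d1 \<oplus>\<^bsub>S\<^esub> e h d2"
  unfolding e_def by (auto intro!: restrict_ext simp: S_simps)

lemma e_smult: "t \<in> carrier K \<Longrightarrow> d \<in> carrier L \<Longrightarrow> e h (t \<odot>\<^bsub>L\<^esub> d) = t \<odot>\<^bsub>S\<^esub> e h d"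
  unfolding e_def by (auto intro!: restrict_ext simp: S_simps)

lemma e_zero: "e h \<zero>\<^bsub>L\<^esub> = \<zero>\<^bsub>S\<^esub>"
  unfolding e_def by (auto intro!: restrict_ext simp: S_simps)

lemma ldS_zero: assumes "\<Phi> \<in> lin_dual K S" shows "\<Phi> \<zero>\<^bsub>S\<^esub> = \<zero>\<^bsub>K\<^esub>"
proof -
  have z: "\<zero>\<^bsub>S\<^esub> \<in> carrier S" by (auto simp: S_simps)
  have "\<zero>\<^bsub>K\<^esub> \<odot>\<^bsub>S\<^esub> \<zero>\<^bsub>S\<^esub> = \<zero>\<^bsub>S\<^esub>" by (auto intro!: restrict_ext simp: S_simps)
  then have "\<Phi> \<zero>\<^bsub>S\<^esub> = \<zero>\<^bsub>K\<^esub> \<otimes>\<^bsub>K\<^esub> \<Phi> \<zero>\<^bsub>S\<^esub>"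
    using ldD(3)[OF assms K.zero_closed z] by simp
  then show ?thesis using ldD(1)[OF assms z] by simp
qed

lemma theta_app: "x \<in> carrier G \<Longrightarrow> c \<in> carrier L \<Longrightarrow>
   theta \<Phi> x c = \<Phi> (e (inv\<^bsub>G\<^esub> x) (act (inv\<^bsub>G\<^esub> x) c))"
  unfolding theta_def by simp

lemma theta_ld: assumes "\<Phi> \<in> lin_dual K S" "x \<in> carrier G"
  shows "theta \<Phi> x \<in> lin_dual K L"
proof (rule ldI)
  let ?i = "inv\<^bsub>G\<^esub> x"
  have i: "?i \<in> carrier G" using assms by simp
  show "theta \<Phi> x c \<in> carrier K" if "c \<in> carrier L" for c
    using that assms by (simp add: theta_app)
  show "theta \<Phi> x \<in> extensional (carrier L)" using assms by (simp add: theta_def)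
  show "theta \<Phi> x (a \<oplus>\<^bsub>L\<^esub> b) = theta \<Phi> x a \<oplus>\<^bsub>K\<^esub> theta \<Phi> x b"
    if "a \<in> carrier L" "b \<in> carrier L" for a b
    using that assms i by (simp add: theta_app e_add ldD(2)[OF assms(1)])
  show "theta \<Phi> x (t \<odot>\<^bsub>L\<^esub> a) = t \<otimes>\<^bsub>K\<^esub> theta \<Phi> x a"
    if "t \<in> carrier K" "a \<in> carrier L" for t a
    using that assms i by (simp add: theta_app e_smult ldD(3)[OF assms(1)])
qed

lemma decomp_aux:
  assumes \<Phi>: "\<Phi> \<in> lin_dual K S" and U: "U \<in> carrier S" and A: "A \<subseteq> carrier G"
  shows "\<Phi> (\<lambda>y\<in>carrier G. if y \<in> A then U y else \<zero>\<^bsub>L\<^esub>) = finsum K (\<lambda>y. \<Phi> (e y (U y))) A"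
proof -
  have fA: "finite A" using A finG finite_subset by blast
  have Uy: "\<And>y. y \<in> carrier G \<Longrightarrow> U y \<in> carrier L" using U by auto
  show ?thesis using fA A
  proof (induction A rule: finite_induct)
    case empty
    have "(\<lambda>y\<in>carrier G. if y \<in> {} then U y else \<zero>\<^bsub>L\<^esub>) = \<zero>\<^bsub>S\<^esub>" by (auto simp: S_simps)
    then show ?case using ldS_zero[OF \<Phi>] by simp
  next
    case (insert a A)
    let ?R = "\<lambda>A. (\<lambda>y\<in>carrier G. if y \<in> A then U y else \<zero>\<^bsub>L\<^esub>)"
    have a: "a \<in> carrier G" using insert by auto
    have eq: "?R (insert a A) = ?R A \<oplus>\<^bsub>S\<^esub> e a (U a)"
      using insert Uy by (auto intro!: restrict_ext simp: e_app S_simps)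
    have RA: "?R A \<in> carrier S" using Uy by auto
    have ea: "e a (U a) \<in> carrier S" using Uy a by auto
    have "\<Phi> (?R (insert a A)) = \<Phi> (?R A) \<oplus>\<^bsub>K\<^esub> \<Phi> (e a (U a))"
      unfolding eq using ldD(2)[OF \<Phi> RA ea] .
    also have "\<dots> = finsum K (\<lambda>y. \<Phi> (e y (U y))) A \<oplus>\<^bsub>K\<^esub> \<Phi> (e a (U a))"
    proof -
      have IH: "\<Phi> (?R A) = finsum K (\<lambda>y. \<Phi> (e y (U y))) A" using insert.IH insert.prems by blast
      show ?thesis by (simp only: IH)
    qed
    also have "\<dots> = finsum K (\<lambda>y. \<Phi> (e y (U y))) (insert a A)"
    proof -
      have c1: "(\<lambda>y. \<Phi> (e y (U y))) \<in> A \<rightarrow> carrier K" using insert Uy ldD(1)[OF \<Phi>] by auto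
      have c2: "\<Phi> (e a (U a)) \<in> carrier K" using ldD(1)[OF \<Phi> ea] .
      show ?thesis using insert c1 c2 K.finsum_closed[OF c1]
        by (simp add: K.finsum_insert K.a_comm)
    qed
    finally show ?case .
  qed
qed

lemma decomp:
  assumes \<Phi>: "\<Phi> \<in> lin_dual K S" and U: "U \<in> carrier S"
  shows "\<Phi> U = finsum K (\<lambda>y. \<Phi> (e y (U y))) (carrier G)"
proof -
  have "(\<lambda>y\<in>carrier G. if y \<in> carrier G then U y else \<zero>\<^bsub>L\<^esub>) = U"
    using U by (auto simp: PiE_def extensional_def)
  then show ?thesis using decomp_aux[OF \<Phi> U subset_refl] by simp
qed

lemma inv_reindex:
  assumes "f \<in> carrier G \<rightarrow> carrier K"
  shows "finsum K f (carrier G) = finsum K (\<lambda>g. f (inv\<^bsub>G\<^esub> g)) (carrier G)"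
proof -
  have im: "(\<lambda>g. inv\<^bsub>G\<^esub> g) ` carrier G = carrier G"
    by (auto intro!: image_eqI[where x="inv\<^bsub>G\<^esub> _"])
  have inj: "inj_on (\<lambda>g. inv\<^bsub>G\<^esub> g) (carrier G)"
    by (metis G.inv_inv inj_onI)
  show ?thesis using K.finsum_reindex[of f "\<lambda>g. inv\<^bsub>G\<^esub> g" "carrier G"] im inj assms by simp
qed

lemma mult_reindex:
  assumes "f \<in> carrier G \<rightarrow> carrier K" "x \<in> carrier G"
  shows "finsum K f (carrier G) = finsum K (\<lambda>g. f (x \<otimes>\<^bsub>G\<^esub> g)) (carrier G)"
  using K.finsum_reindex[of f "\<lambda>g. x \<otimes>\<^bsub>G\<^esub> g" "carrier G"] assms
    G.surj_const_mult G.inj_on_cmult by simp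

end


context tsetup begin

lemma grp_eq1: "g \<in> carrier G \<Longrightarrow> y \<in> carrier G \<Longrightarrow> x \<in> carrier G \<Longrightarrow>
   (inv\<^bsub>G\<^esub> g \<otimes>\<^bsub>G\<^esub> y = inv\<^bsub>G\<^esub> x) = (g = y \<otimes>\<^bsub>G\<^esub> x)"
  by (metis G.inv_closed G.inv_solve_left' G.inv_solve_right')

lemma grp_eq2: "y \<in> carrier G \<Longrightarrow> x \<in> carrier G \<Longrightarrow>
   inv\<^bsub>G\<^esub> (x \<otimes>\<^bsub>G\<^esub> y) \<otimes>\<^bsub>G\<^esub> x = inv\<^bsub>G\<^esub> y"
  by (simp add: G.inv_mult_group G.m_assoc)

lemma grp_eq3: "y \<in> carrier G \<Longrightarrow> x \<in> carrier G \<Longrightarrow>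
   inv\<^bsub>G\<^esub> x \<otimes>\<^bsub>G\<^esub> (x \<otimes>\<^bsub>G\<^esub> y) = y"
  by (simp add: G.m_assoc[symmetric])

lemma S_mult_app: "y \<in> carrier G \<Longrightarrow> (u \<otimes>\<^bsub>S\<^esub> v) y =
    finsum L (\<lambda>g. u g \<otimes>\<^bsub>L\<^esub> act g (v (inv\<^bsub>G\<^esub> g \<otimes>\<^bsub>G\<^esub> y))) (carrier G)"
  by (simp add: S_simps)

lemma right_act:
  assumes \<Phi>: "\<Phi> \<in> lin_dual K S" and v: "v \<in> carrier S" and x: "x \<in> carrier G" and c: "c \<in> carrier L"
  shows "\<Phi> (v \<otimes>\<^bsub>S\<^esub> e (inv\<^bsub>G\<^esub> x) (act (inv\<^bsub>G\<^esub> x) c)) =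
     finsum K (\<lambda>g. theta \<Phi> g (act g (v (inv\<^bsub>G\<^esub> g \<otimes>\<^bsub>G\<^esub> x)) \<otimes>\<^bsub>L\<^esub> c)) (carrier G)"
proof -
  let ?E = "e (inv\<^bsub>G\<^esub> x) (act (inv\<^bsub>G\<^esub> x) c)"
  have vy: "\<And>y. y \<in> carrier G \<Longrightarrow> v y \<in> carrier L" using v by auto
  have pt: "(v \<otimes>\<^bsub>S\<^esub> ?E) y = v (y \<otimes>\<^bsub>G\<^esub> x) \<otimes>\<^bsub>L\<^esub> act y c" if y: "y \<in> carrier G" for y
  proof -
    have "(v \<otimes>\<^bsub>S\<^esub> ?E) y = finsum L (\<lambda>g. v g \<otimes>\<^bsub>L\<^esub> act g (?E (inv\<^bsub>G\<^esub> g \<otimes>\<^bsub>G\<^esub> y))) (carrier G)"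
      using y by (rule S_mult_app)
    also have "\<dots> = finsum L (\<lambda>g. if g = y \<otimes>\<^bsub>G\<^esub> x then v g \<otimes>\<^bsub>L\<^esub> act g (act (inv\<^bsub>G\<^esub> x) c) else \<zero>\<^bsub>L\<^esub>) (carrier G)"
      using x y c vy by (intro L.finsum_cong') (auto simp: e_app grp_eq1)
    also have "\<dots> = v (y \<otimes>\<^bsub>G\<^esub> x) \<otimes>\<^bsub>L\<^esub> act (y \<otimes>\<^bsub>G\<^esub> x) (act (inv\<^bsub>G\<^esub> x) c)"
      using x y c vy finG by (intro L.finsum_single_swap) auto
    also have "\<dots> = v (y \<otimes>\<^bsub>G\<^esub> x) \<otimes>\<^bsub>L\<^esub> act y c"
      using x y c by (simp add: act_comp)
    finally show ?thesis .
  qed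
  have vEc: "v \<otimes>\<^bsub>S\<^esub> ?E \<in> carrier S"
  proof -
    have "v \<otimes>\<^bsub>S\<^esub> ?E = (\<lambda>y\<in>carrier G. (v \<otimes>\<^bsub>S\<^esub> ?E) y)" by (simp add: S_simps)
    then show ?thesis using pt x c vy by auto
  qed
  have "\<Phi> (v \<otimes>\<^bsub>S\<^esub> ?E) = finsum K (\<lambda>y. \<Phi> (e y ((v \<otimes>\<^bsub>S\<^esub> ?E) y))) (carrier G)"
    by (rule decomp[OF \<Phi> vEc])
  also have "\<dots> = finsum K (\<lambda>y. \<Phi> (e y (v (y \<otimes>\<^bsub>G\<^esub> x) \<otimes>\<^bsub>L\<^esub> act y c))) (carrier G)"
    using pt by (intro K.finsum_cong') (auto intro!: ldD(1)[OF \<Phi>] simp: x c vy)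
  also have "\<dots> = finsum K (\<lambda>g. \<Phi> (e (inv\<^bsub>G\<^esub> g) (v (inv\<^bsub>G\<^esub> g \<otimes>\<^bsub>G\<^esub> x) \<otimes>\<^bsub>L\<^esub> act (inv\<^bsub>G\<^esub> g) c))) (carrier G)"
    by (rule inv_reindex) (auto intro!: ldD(1)[OF \<Phi>] simp: x c vy)
  also have "\<dots> = finsum K (\<lambda>g. theta \<Phi> g (act g (v (inv\<^bsub>G\<^esub> g \<otimes>\<^bsub>G\<^esub> x)) \<otimes>\<^bsub>L\<^esub> c)) (carrier G)"
    by (intro K.finsum_cong') (auto intro!: ldD(1)[OF \<Phi>] simp: x c vy theta_app)
  finally show ?thesis .
qed

lemma left_act:
  assumes \<Psi>: "\<Psi> \<in> lin_dual K S" and u: "u \<in> carrier S" and x: "x \<in> carrier G" and c: "c \<in> carrier L"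
  shows "\<Psi> (e (inv\<^bsub>G\<^esub> x) (act (inv\<^bsub>G\<^esub> x) c) \<otimes>\<^bsub>S\<^esub> u) =
     finsum K (\<lambda>g. theta \<Psi> (inv\<^bsub>G\<^esub> g \<otimes>\<^bsub>G\<^esub> x) (act (inv\<^bsub>G\<^esub> g) (c \<otimes>\<^bsub>L\<^esub> u g))) (carrier G)"
proof -
  let ?E = "e (inv\<^bsub>G\<^esub> x) (act (inv\<^bsub>G\<^esub> x) c)"
  have uy: "\<And>y. y \<in> carrier G \<Longrightarrow> u y \<in> carrier L" using u by auto
  have pt: "(?E \<otimes>\<^bsub>S\<^esub> u) y = act (inv\<^bsub>G\<^esub> x) (c \<otimes>\<^bsub>L\<^esub> u (x \<otimes>\<^bsub>G\<^esub> y))" if y: "y \<in> carrier G" for y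
  proof -
    have "(?E \<otimes>\<^bsub>S\<^esub> u) y = finsum L (\<lambda>g. ?E g \<otimes>\<^bsub>L\<^esub> act g (u (inv\<^bsub>G\<^esub> g \<otimes>\<^bsub>G\<^esub> y))) (carrier G)"
      using y by (rule S_mult_app)
    also have "\<dots> = finsum L (\<lambda>g. if g = inv\<^bsub>G\<^esub> x then act (inv\<^bsub>G\<^esub> x) c \<otimes>\<^bsub>L\<^esub> act g (u (inv\<^bsub>G\<^esub> g \<otimes>\<^bsub>G\<^esub> y)) else \<zero>\<^bsub>L\<^esub>) (carrier G)"
      using x y c uy by (intro L.finsum_cong') (auto simp: e_app)
    also have "\<dots> = act (inv\<^bsub>G\<^esub> x) c \<otimes>\<^bsub>L\<^esub> act (inv\<^bsub>G\<^esub> x) (u (inv\<^bsub>G\<^esub> (inv\<^bsub>G\<^esub> x) \<otimes>\<^bsub>G\<^esub> y))"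
      using x y c uy finG by (intro L.finsum_single_swap) auto
    also have "\<dots> = act (inv\<^bsub>G\<^esub> x) (c \<otimes>\<^bsub>L\<^esub> u (x \<otimes>\<^bsub>G\<^esub> y))"
      using x y c uy by simp
    finally show ?thesis .
  qed
  have Euc: "?E \<otimes>\<^bsub>S\<^esub> u \<in> carrier S"
  proof -
    have "?E \<otimes>\<^bsub>S\<^esub> u = (\<lambda>y\<in>carrier G. (?E \<otimes>\<^bsub>S\<^esub> u) y)" by (simp add: S_simps)
    then show ?thesis using pt x c uy by auto
  qed
  have "\<Psi> (?E \<otimes>\<^bsub>S\<^esub> u) = finsum K (\<lambda>y. \<Psi> (e y ((?E \<otimes>\<^bsub>S\<^esub> u) y))) (carrier G)"
    by (rule decomp[OF \<Psi> Euc])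
  also have "\<dots> = finsum K (\<lambda>y. \<Psi> (e y (act (inv\<^bsub>G\<^esub> x) (c \<otimes>\<^bsub>L\<^esub> u (x \<otimes>\<^bsub>G\<^esub> y))))) (carrier G)"
    using pt by (intro K.finsum_cong') (auto intro!: ldD(1)[OF \<Psi>] simp: x c uy)
  also have "\<dots> = finsum K (\<lambda>y. theta \<Psi> (inv\<^bsub>G\<^esub> (x \<otimes>\<^bsub>G\<^esub> y) \<otimes>\<^bsub>G\<^esub> x) (act (inv\<^bsub>G\<^esub> (x \<otimes>\<^bsub>G\<^esub> y)) (c \<otimes>\<^bsub>L\<^esub> u (x \<otimes>\<^bsub>G\<^esub> y)))) (carrier G)"
  proof (intro K.finsum_cong')
    fix y assume y: "y \<in> carrier G"
    have "theta \<Psi> (inv\<^bsub>G\<^esub> (x \<otimes>\<^bsub>G\<^esub> y) \<otimes>\<^bsub>G\<^esub> x) (act (inv\<^bsub>G\<^esub> (x \<otimes>\<^bsub>G\<^esub> y)) (c \<otimes>\<^bsub>L\<^esub> u (x \<otimes>\<^bsub>G\<^esub> y)))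
       = \<Psi> (e y (act y (act (inv\<^bsub>G\<^esub> y \<otimes>\<^bsub>G\<^esub> inv\<^bsub>G\<^esub> x) (c \<otimes>\<^bsub>L\<^esub> u (x \<otimes>\<^bsub>G\<^esub> y)))))"
      using x y c uy by (simp add: grp_eq2 grp_eq3 theta_app G.inv_mult_group)
    also have "\<dots> = \<Psi> (e y (act (inv\<^bsub>G\<^esub> x) (c \<otimes>\<^bsub>L\<^esub> u (x \<otimes>\<^bsub>G\<^esub> y))))"
      using x y c uy by (simp add: act_comp)
    finally show "\<Psi> (e y (act (inv\<^bsub>G\<^esub> x) (c \<otimes>\<^bsub>L\<^esub> u (x \<otimes>\<^bsub>G\<^esub> y)))) =
      theta \<Psi> (inv\<^bsub>G\<^esub> (x \<otimes>\<^bsub>G\<^esub> y) \<otimes>\<^bsub>G\<^esub> x) (act (inv\<^bsub>G\<^esub> (x \<otimes>\<^bsub>G\<^esub> y)) (c \<otimes>\<^bsub>L\<^esub> u (x \<otimes>\<^bsub>G\<^esub> y)))"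
      by simp
  next
    show "(\<lambda>y. theta \<Psi> (inv\<^bsub>G\<^esub> (x \<otimes>\<^bsub>G\<^esub> y) \<otimes>\<^bsub>G\<^esub> x) (act (inv\<^bsub>G\<^esub> (x \<otimes>\<^bsub>G\<^esub> y)) (c \<otimes>\<^bsub>L\<^esub> u (x \<otimes>\<^bsub>G\<^esub> y)))) \<in> carrier G \<rightarrow> carrier K"
      using x c uy by (auto simp: grp_eq2 theta_app intro!: ldD(1)[OF \<Psi>])
  qed simp
  also have "\<dots> = finsum K (\<lambda>g. theta \<Psi> (inv\<^bsub>G\<^esub> g \<otimes>\<^bsub>G\<^esub> x) (act (inv\<^bsub>G\<^esub> g) (c \<otimes>\<^bsub>L\<^esub> u g))) (carrier G)"
    by (rule mult_reindex[symmetric]) (auto simp: x c uy theta_app intro!: ldD(1)[OF \<Psi>])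
  finally show ?thesis .
qed

end


context tsetup begin

definition F :: "('g \<Rightarrow> 'a) \<times> (('g \<Rightarrow> 'a) \<Rightarrow> 'k) \<Rightarrow> 'g \<Rightarrow> 'a \<times> ('a \<Rightarrow> 'k)" where
  "F p = (\<lambda>x\<in>carrier G. (fst p x, theta (snd p) x))"

lemma F_app: "x \<in> carrier G \<Longrightarrow> F (u, \<Phi>) x = (u x, theta \<Phi> x)"
  by (simp add: F_def)

lemma F_closed: "u \<in> carrier S \<Longrightarrow> \<Phi> \<in> lin_dual K S \<Longrightarrow> F (u, \<Phi>) \<in> carrier ST"
  by (auto simp: F_def theta_ld)

lemma E_in: "x \<in> carrier G \<Longrightarrow> c \<in> carrier L \<Longrightarrow> e (inv\<^bsub>G\<^esub> x) (act (inv\<^bsub>G\<^esub> x) c) \<in> carrier S"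
  by simp

lemma F_mult:
  assumes u: "u \<in> carrier S" and \<Phi>: "\<Phi> \<in> lin_dual K S"
    and u': "u' \<in> carrier S" and \<Phi>': "\<Phi>' \<in> lin_dual K S"
  shows "F ((u, \<Phi>) \<otimes>\<^bsub>TS\<^esub> (u', \<Phi>')) = F (u, \<Phi>) \<otimes>\<^bsub>ST\<^esub> F (u', \<Phi>')"
proof -
  let ?\<Psi> = "\<lambda>C\<in>carrier S. \<Phi>' (C \<otimes>\<^bsub>S\<^esub> u) \<oplus>\<^bsub>K\<^esub> \<Phi> (u' \<otimes>\<^bsub>S\<^esub> C)"
  have lhs: "(u, \<Phi>) \<otimes>\<^bsub>TS\<^esub> (u', \<Phi>') = (u \<otimes>\<^bsub>S\<^esub> u', ?\<Psi>)" by simp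
  have uy: "\<And>y. y \<in> carrier G \<Longrightarrow> u y \<in> carrier L" using u by auto
  have u'y: "\<And>y. y \<in> carrier G \<Longrightarrow> u' y \<in> carrier L" using u' by auto
  have FT: "\<And>y. y \<in> carrier G \<Longrightarrow> F (u, \<Phi>) y \<in> carrier T" "\<And>y. y \<in> carrier G \<Longrightarrow> F (u', \<Phi>') y \<in> carrier T"
    using F_closed[OF u \<Phi>] F_closed[OF u' \<Phi>'] by auto
  show ?thesis
    unfolding lhs
  proof (subst ST_simps(2), subst F_def, rule restrict_ext)
    fix x assume x: "x \<in> carrier G"
    let ?h = "\<lambda>g. F (u, \<Phi>) g \<otimes>\<^bsub>T\<^esub> tact g (F (u', \<Phi>') (inv\<^bsub>G\<^esub> g \<otimes>\<^bsub>G\<^esub> x))"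
    have hc: "?h \<in> carrier G \<rightarrow> carrier T"
    proof
      fix g assume g: "g \<in> carrier G"
      have "inv\<^bsub>G\<^esub> g \<otimes>\<^bsub>G\<^esub> x \<in> carrier G" using g x by simp
      then show "?h g \<in> carrier T" by (intro T_mult_closed FT(1)[OF g] tact_closed[OF g] FT(2))
    qed
    have h_eq: "?h g = (u g \<otimes>\<^bsub>L\<^esub> act g (u' (inv\<^bsub>G\<^esub> g \<otimes>\<^bsub>G\<^esub> x)),
        \<lambda>c\<in>carrier L. theta \<Phi>' (inv\<^bsub>G\<^esub> g \<otimes>\<^bsub>G\<^esub> x) (act (inv\<^bsub>G\<^esub> g) (c \<otimes>\<^bsub>L\<^esub> u g)) \<oplus>\<^bsub>K\<^esub>
                     theta \<Phi> g (act g (u' (inv\<^bsub>G\<^esub> g \<otimes>\<^bsub>G\<^esub> x)) \<otimes>\<^bsub>L\<^esub> c))"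
      if g: "g \<in> carrier G" for g
      using g x uy u'y by (simp add: F_app)
    have "finsum T ?h (carrier G) = (finsum L (\<lambda>g. fst (?h g)) (carrier G),
            \<lambda>c\<in>carrier L. finsum K (\<lambda>g. snd (?h g) c) (carrier G))"
      by (rule finsum_T[OF finG hc])
    also have "finsum L (\<lambda>g. fst (?h g)) (carrier G) = (u \<otimes>\<^bsub>S\<^esub> u') x"
      using x uy u'y h_eq by (auto simp: S_mult_app intro!: L.finsum_cong')
    also have "(\<lambda>c\<in>carrier L. finsum K (\<lambda>g. snd (?h g) c) (carrier G)) = theta ?\<Psi> x"
    proof -
      have "theta ?\<Psi> x = (\<lambda>c\<in>carrier L. ?\<Psi> (e (inv\<^bsub>G\<^esub> x) (act (inv\<^bsub>G\<^esub> x) c)))"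
        using x by (simp add: theta_def)
      also have "\<dots> = (\<lambda>c\<in>carrier L.
          finsum K (\<lambda>g. theta \<Phi>' (inv\<^bsub>G\<^esub> g \<otimes>\<^bsub>G\<^esub> x) (act (inv\<^bsub>G\<^esub> g) (c \<otimes>\<^bsub>L\<^esub> u g))) (carrier G)
          \<oplus>\<^bsub>K\<^esub> finsum K (\<lambda>g. theta \<Phi> g (act g (u' (inv\<^bsub>G\<^esub> g \<otimes>\<^bsub>G\<^esub> x)) \<otimes>\<^bsub>L\<^esub> c)) (carrier G))"
      proof (rule restrict_ext)
        fix c assume c: "c \<in> carrier L"
        have Ein: "e (inv\<^bsub>G\<^esub> x) (act (inv\<^bsub>G\<^esub> x) c) \<in> carrier S" using E_in[OF x c] .
        show "?\<Psi> (e (inv\<^bsub>G\<^esub> x) (act (inv\<^bsub>G\<^esub> x) c)) = 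
          finsum K (\<lambda>g. theta \<Phi>' (inv\<^bsub>G\<^esub> g \<otimes>\<^bsub>G\<^esub> x) (act (inv\<^bsub>G\<^esub> g) (c \<otimes>\<^bsub>L\<^esub> u g))) (carrier G)
          \<oplus>\<^bsub>K\<^esub> finsum K (\<lambda>g. theta \<Phi> g (act g (u' (inv\<^bsub>G\<^esub> g \<otimes>\<^bsub>G\<^esub> x)) \<otimes>\<^bsub>L\<^esub> c)) (carrier G)"
          using Ein left_act[OF \<Phi>' u x c] right_act[OF \<Phi> u' x c] by simp
      qed
      also have "\<dots> = (\<lambda>c\<in>carrier L. finsum K (\<lambda>g. snd (?h g) c) (carrier G))"
      proof (rule restrict_ext)
        fix c assume c: "c \<in> carrier L"
        have c1: "(\<lambda>g. theta \<Phi>' (inv\<^bsub>G\<^esub> g \<otimes>\<^bsub>G\<^esub> x) (act (inv\<^bsub>G\<^esub> g) (c \<otimes>\<^bsub>L\<^esub> u g))) \<in> carrier G \<rightarrow> carrier K"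
          using x c uy \<Phi>' by (auto simp: theta_app)
        have c2: "(\<lambda>g. theta \<Phi> g (act g (u' (inv\<^bsub>G\<^esub> g \<otimes>\<^bsub>G\<^esub> x)) \<otimes>\<^bsub>L\<^esub> c)) \<in> carrier G \<rightarrow> carrier K"
          using x c u'y \<Phi> by (auto simp: theta_app)
        show "finsum K (\<lambda>g. theta \<Phi>' (inv\<^bsub>G\<^esub> g \<otimes>\<^bsub>G\<^esub> x) (act (inv\<^bsub>G\<^esub> g) (c \<otimes>\<^bsub>L\<^esub> u g))) (carrier G)
          \<oplus>\<^bsub>K\<^esub> finsum K (\<lambda>g. theta \<Phi> g (act g (u' (inv\<^bsub>G\<^esub> g \<otimes>\<^bsub>G\<^esub> x)) \<otimes>\<^bsub>L\<^esub> c)) (carrier G)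
          = finsum K (\<lambda>g. snd (?h g) c) (carrier G)"
          unfolding K.finsum_addf[OF c1 c2, symmetric]
        proof (rule K.finsum_cong'[OF refl])
          show "(\<lambda>g. snd (?h g) c) \<in> carrier G \<rightarrow> carrier K"
            using hc c by (auto simp: Pi_def mem_Times_iff simp del: triv_simps(2))
          fix g assume g: "g \<in> carrier G"
          show "theta \<Phi>' (inv\<^bsub>G\<^esub> g \<otimes>\<^bsub>G\<^esub> x) (act (inv\<^bsub>G\<^esub> g) (c \<otimes>\<^bsub>L\<^esub> u g)) \<oplus>\<^bsub>K\<^esub>
                     theta \<Phi> g (act g (u' (inv\<^bsub>G\<^esub> g \<otimes>\<^bsub>G\<^esub> x)) \<otimes>\<^bsub>L\<^esub> c) = snd (?h g) c"
            unfolding h_eq[OF g] using c by simp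
        qed
      qed
      finally show ?thesis by simp
    qed
    finally show "(fst (u \<otimes>\<^bsub>S\<^esub> u', ?\<Psi>) x, theta (snd (u \<otimes>\<^bsub>S\<^esub> u', ?\<Psi>)) x) = finsum T ?h (carrier G)"
      by simp
  qed
qed

end


context tsetup begin

lemma F_add:
  assumes u: "u \<in> carrier S" and \<Phi>: "\<Phi> \<in> lin_dual K S"
    and u': "u' \<in> carrier S" and \<Phi>': "\<Phi>' \<in> lin_dual K S"
  shows "F ((u, \<Phi>) \<oplus>\<^bsub>TS\<^esub> (u', \<Phi>')) = F (u, \<Phi>) \<oplus>\<^bsub>ST\<^esub> F (u', \<Phi>')"
  unfolding ST_simps(5) F_def
proof (rule restrict_ext)
  fix x assume x: "x \<in> carrier G"
  have "theta (\<lambda>c\<in>carrier S. \<Phi> c \<oplus>\<^bsub>K\<^esub> \<Phi>' c) x = (\<lambda>c\<in>carrier L. theta \<Phi> x c \<oplus>\<^bsub>K\<^esub> theta \<Phi>' x c)"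
    using x by (auto simp: theta_app intro!: restrict_ext simp: theta_def)
  then show "(fst ((u, \<Phi>) \<oplus>\<^bsub>TS\<^esub> (u', \<Phi>')) x, theta (snd ((u, \<Phi>) \<oplus>\<^bsub>TS\<^esub> (u', \<Phi>'))) x) =
         (\<lambda>x\<in>carrier G. (fst (u, \<Phi>) x, theta (snd (u, \<Phi>)) x)) x \<oplus>\<^bsub>T\<^esub>
         (\<lambda>x\<in>carrier G. (fst (u', \<Phi>') x, theta (snd (u', \<Phi>')) x)) x"
    using x by (simp add: S_simps)
qed

lemma F_one: "F \<one>\<^bsub>TS\<^esub> = \<one>\<^bsub>ST\<^esub>"
  unfolding ST_simps(3) F_def
proof (rule restrict_ext)
  fix x assume x: "x \<in> carrier G"
  have "theta (\<lambda>c\<in>carrier S. \<zero>\<^bsub>K\<^esub>) x = (\<lambda>c\<in>carrier L. \<zero>\<^bsub>K\<^esub>)"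
    using x by (auto intro!: restrict_ext simp: theta_def)
  then show "(fst \<one>\<^bsub>TS\<^esub> x, theta (snd \<one>\<^bsub>TS\<^esub>) x) = (if x = \<one>\<^bsub>G\<^esub> then \<one>\<^bsub>T\<^esub> else \<zero>\<^bsub>T\<^esub>)"
    using x by (simp add: S_simps)
qed

lemma F_smult:
  assumes t: "t \<in> carrier K" and u: "u \<in> carrier S" and \<Phi>: "\<Phi> \<in> lin_dual K S"
  shows "F (t \<odot>\<^bsub>TS\<^esub> (u, \<Phi>)) = t \<odot>\<^bsub>ST\<^esub> F (u, \<Phi>)"
  unfolding ST_simps(6) F_def
proof (rule restrict_ext)
  fix x assume x: "x \<in> carrier G"
  have "theta (\<lambda>c\<in>carrier S. t \<otimes>\<^bsub>K\<^esub> \<Phi> c) x = (\<lambda>c\<in>carrier L. t \<otimes>\<^bsub>K\<^esub> theta \<Phi> x c)"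
    using x by (auto simp: theta_app intro!: restrict_ext simp: theta_def)
  then show "(fst (t \<odot>\<^bsub>TS\<^esub> (u, \<Phi>)) x, theta (snd (t \<odot>\<^bsub>TS\<^esub> (u, \<Phi>))) x) =
         t \<odot>\<^bsub>T\<^esub> (\<lambda>x\<in>carrier G. (fst (u, \<Phi>) x, theta (snd (u, \<Phi>)) x)) x"
    using x by (simp add: S_simps)
qed

lemma ldL_zero: assumes "\<phi> \<in> lin_dual K L" shows "\<phi> \<zero>\<^bsub>L\<^esub> = \<zero>\<^bsub>K\<^esub>"
proof -
  have "\<phi> \<zero>\<^bsub>L\<^esub> = \<phi> (\<zero>\<^bsub>K\<^esub> \<odot>\<^bsub>L\<^esub> \<zero>\<^bsub>L\<^esub>)" by simp
  also have "\<dots> = \<zero>\<^bsub>K\<^esub> \<otimes>\<^bsub>K\<^esub> \<phi> \<zero>\<^bsub>L\<^esub>" by (rule ldD(3)[OF assms]) auto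
  also have "\<dots> = \<zero>\<^bsub>K\<^esub>" using assms by simp
  finally show ?thesis .
qed

lemma e_theta: "y \<in> carrier G \<Longrightarrow> d \<in> carrier L \<Longrightarrow>
    \<Phi> (e y d) = theta \<Phi> (inv\<^bsub>G\<^esub> y) (act (inv\<^bsub>G\<^esub> y) d)"
  by (simp add: theta_app)

lemma F_inj: "inj_on F (carrier TS)"
proof (rule inj_onI)
  fix p q assume p: "p \<in> carrier TS" and q: "q \<in> carrier TS" and eq: "F p = F q"
  obtain u \<Phi> where pp: "p = (u, \<Phi>)" by (cases p)
  obtain u' \<Phi>' where qq: "q = (u', \<Phi>')" by (cases q)
  have u: "u \<in> carrier S" and \<Phi>: "\<Phi> \<in> lin_dual K S" using p pp by auto
  have u': "u' \<in> carrier S" and \<Phi>': "\<Phi>' \<in> lin_dual K S" using q qq by auto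
  have pt: "u x = u' x \<and> theta \<Phi> x = theta \<Phi>' x" if "x \<in> carrier G" for x
    using fun_cong[OF eq, of x] that by (simp add: pp qq F_app)
  have "u = u'"
  proof
    fix x show "u x = u' x"
      using pt u u' by (cases "x \<in> carrier G") (auto simp: PiE_def extensional_def)
  qed
  moreover have "\<Phi> = \<Phi>'"
  proof
    fix U show "\<Phi> U = \<Phi>' U"
    proof (cases "U \<in> carrier S")
      case True
      have Uy: "\<And>y. y \<in> carrier G \<Longrightarrow> U y \<in> carrier L" using True by auto
      show ?thesis
        unfolding decomp[OF \<Phi> True] decomp[OF \<Phi>' True]
      proof (rule K.finsum_cong'[OF refl])
        show "(\<lambda>y. \<Phi>' (e y (U y))) \<in> carrier G \<rightarrow> carrier K" using Uy \<Phi>' by auto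
        fix y assume y: "y \<in> carrier G"
        show "\<Phi> (e y (U y)) = \<Phi>' (e y (U y))"
          using y Uy pt[of "inv\<^bsub>G\<^esub> y"] by (simp add: e_theta[of y "U y" \<Phi>] e_theta[of y "U y" \<Phi>'])
      qed
    next
      case False
      then show ?thesis using \<Phi> \<Phi>' unfolding lin_dual_def by (auto simp: PiE_def extensional_def)
    qed
  qed
  ultimately show "p = q" using pp qq by simp
qed

lemma F_surj:
  assumes w: "w \<in> carrier ST"
  shows "\<exists>p\<in>carrier TS. F p = w"
proof -
  define u where "u = (\<lambda>x\<in>carrier G. fst (w x))"
  define f where "f = (\<lambda>x. snd (w x))"
  define \<Phi> where "\<Phi> = (\<lambda>U\<in>carrier S. finsum K (\<lambda>y. f (inv\<^bsub>G\<^esub> y) (act (inv\<^bsub>G\<^esub> y) (U y))) (carrier G))"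
  have wx: "\<And>x. x \<in> carrier G \<Longrightarrow> w x \<in> carrier L \<times> lin_dual K L" using w by auto
  have f: "\<And>x. x \<in> carrier G \<Longrightarrow> f x \<in> lin_dual K L" using wx unfolding f_def by (auto simp: mem_Times_iff)
  have u: "u \<in> carrier S" using wx unfolding u_def by (auto simp: mem_Times_iff)
  have Pi1: "(\<lambda>y. f (inv\<^bsub>G\<^esub> y) (act (inv\<^bsub>G\<^esub> y) (U y))) \<in> carrier G \<rightarrow> carrier K" if "U \<in> carrier S" for U
  proof
    fix y assume y: "y \<in> carrier G"
    have "U y \<in> carrier L" using that y by auto
    then show "f (inv\<^bsub>G\<^esub> y) (act (inv\<^bsub>G\<^esub> y) (U y)) \<in> carrier K"
      using y by (intro ldD(1)[OF f]) auto
  qed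
  have \<Phi>: "\<Phi> \<in> lin_dual K S"
  proof (rule ldI)
    show "\<Phi> U \<in> carrier K" if "U \<in> carrier S" for U
      using that Pi1[OF that] unfolding \<Phi>_def by (simp add: K.finsum_closed)
    show "\<Phi> \<in> extensional (carrier S)" unfolding \<Phi>_def by simp
    show "\<Phi> (U \<oplus>\<^bsub>S\<^esub> V) = \<Phi> U \<oplus>\<^bsub>K\<^esub> \<Phi> V" if U: "U \<in> carrier S" and V: "V \<in> carrier S" for U V
    proof -
      have UV: "U \<oplus>\<^bsub>S\<^esub> V \<in> carrier S" using U V by (auto simp: S_simps)
      have "\<Phi> (U \<oplus>\<^bsub>S\<^esub> V) = finsum K (\<lambda>y. f (inv\<^bsub>G\<^esub> y) (act (inv\<^bsub>G\<^esub> y) (U y)) \<oplus>\<^bsub>K\<^esub>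
               f (inv\<^bsub>G\<^esub> y) (act (inv\<^bsub>G\<^esub> y) (V y))) (carrier G)"
        unfolding \<Phi>_def using UV
      proof (simp, intro K.finsum_cong'[OF refl])
        show "(\<lambda>y. f (inv\<^bsub>G\<^esub> y) (act (inv\<^bsub>G\<^esub> y) (U y)) \<oplus>\<^bsub>K\<^esub>
               f (inv\<^bsub>G\<^esub> y) (act (inv\<^bsub>G\<^esub> y) (V y))) \<in> carrier G \<rightarrow> carrier K"
          using Pi1[OF U] Pi1[OF V] by auto
        fix y assume y: "y \<in> carrier G"
        have Uy: "U y \<in> carrier L" and Vy: "V y \<in> carrier L" using U V y by auto
        show "f (inv\<^bsub>G\<^esub> y) (act (inv\<^bsub>G\<^esub> y) ((U \<oplus>\<^bsub>S\<^esub> V) y)) =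
          f (inv\<^bsub>G\<^esub> y) (act (inv\<^bsub>G\<^esub> y) (U y)) \<oplus>\<^bsub>K\<^esub> f (inv\<^bsub>G\<^esub> y) (act (inv\<^bsub>G\<^esub> y) (V y))"
          using y Uy Vy by (simp add: S_simps ldD(2)[OF f])
      qed
      also have "\<dots> = \<Phi> U \<oplus>\<^bsub>K\<^esub> \<Phi> V"
        unfolding \<Phi>_def using U V by (simp add: K.finsum_addf[OF Pi1[OF U] Pi1[OF V]])
      finally show ?thesis .
    qed
    show "\<Phi> (t \<odot>\<^bsub>S\<^esub> U) = t \<otimes>\<^bsub>K\<^esub> \<Phi> U" if t: "t \<in> carrier K" and U: "U \<in> carrier S" for t U
    proof -
      have tU: "t \<odot>\<^bsub>S\<^esub> U \<in> carrier S" using t U by (auto simp: S_simps)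
      have "\<Phi> (t \<odot>\<^bsub>S\<^esub> U) = finsum K (\<lambda>y. t \<otimes>\<^bsub>K\<^esub> f (inv\<^bsub>G\<^esub> y) (act (inv\<^bsub>G\<^esub> y) (U y))) (carrier G)"
        unfolding \<Phi>_def using tU
      proof (simp, intro K.finsum_cong'[OF refl])
        show "(\<lambda>y. t \<otimes>\<^bsub>K\<^esub> f (inv\<^bsub>G\<^esub> y) (act (inv\<^bsub>G\<^esub> y) (U y))) \<in> carrier G \<rightarrow> carrier K"
          using Pi1[OF U] t by auto
        fix y assume y: "y \<in> carrier G"
        have Uy: "U y \<in> carrier L" using U y by auto
        show "f (inv\<^bsub>G\<^esub> y) (act (inv\<^bsub>G\<^esub> y) ((t \<odot>\<^bsub>S\<^esub> U) y)) =
          t \<otimes>\<^bsub>K\<^esub> f (inv\<^bsub>G\<^esub> y) (act (inv\<^bsub>G\<^esub> y) (U y))"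
          using y Uy t by (simp add: S_simps ldD(3)[OF f])
      qed
      also have "\<dots> = t \<otimes>\<^bsub>K\<^esub> \<Phi> U"
        unfolding \<Phi>_def using t U by (simp add: K.finsum_rdistr[OF finG t Pi1[OF U]])
      finally show ?thesis .
    qed
  qed
  have "F (u, \<Phi>) = w"
  proof
    fix x show "F (u, \<Phi>) x = w x"
    proof (cases "x \<in> carrier G")
      case False
      then show ?thesis using w by (simp add: F_def PiE_def extensional_def)
    next
      case x: True
      have "theta \<Phi> x = f x"
      proof -
        have "theta \<Phi> x = (\<lambda>c\<in>carrier L. f x c)"
          unfolding theta_def using x
        proof (simp, intro restrict_ext)
          fix c assume c: "c \<in> carrier L"
          have "\<Phi> (e (inv\<^bsub>G\<^esub> x) (act (inv\<^bsub>G\<^esub> x) c)) =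
              finsum K (\<lambda>y. if y = inv\<^bsub>G\<^esub> x then f x c else \<zero>\<^bsub>K\<^esub>) (carrier G)"
            unfolding \<Phi>_def using x c
            by (simp, intro K.finsum_cong') (use f ldD(1)[OF f] in \<open>auto simp: e_app ldL_zero\<close>)
          also have "\<dots> = f x c"
            using K.finsum_single_swap[of "inv\<^bsub>G\<^esub> x" "carrier G" "\<lambda>_. f x c"] x c f finG ldD(1)[OF f[OF x] c] by simp
          finally show "\<Phi> (e (inv\<^bsub>G\<^esub> x) (act (inv\<^bsub>G\<^esub> x) c)) = f x c" .
        qed
        then show ?thesis using f[OF x] by simp
      qed
      then show ?thesis using x by (simp add: F_app u_def f_def)
    qed
  qed
  moreover have "(u, \<Phi>) \<in> carrier TS" using u \<Phi> by simp
  ultimately show ?thesis by blast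
qed

lemma F_closed': assumes "p \<in> carrier TS" shows "F p \<in> carrier ST"
proof -
  obtain u \<Phi> where pp: "p = (u, \<Phi>)" by (cases p)
  have u: "u \<in> carrier S" and \<Phi>: "\<Phi> \<in> lin_dual K S" using assms pp by auto
  show ?thesis unfolding pp by (rule F_closed[OF u \<Phi>])
qed

lemma F_iso: "alg_iso K TS ST F"
  unfolding alg_iso_def ring_iso_def ring_hom_def
proof (intro conjI CollectI ballI allI impI)
  show "F \<in> carrier TS \<rightarrow> carrier ST" using F_closed' by (simp del: ST_simps triv_simps)
  fix p q assume pq: "p \<in> carrier TS \<and> q \<in> carrier TS"
  obtain u \<Phi> where pp: "p = (u, \<Phi>)" by (cases p)
  obtain u' \<Phi>' where qq: "q = (u', \<Phi>')" by (cases q)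
  have u: "u \<in> carrier S" and \<Phi>: "\<Phi> \<in> lin_dual K S" using pq pp by auto
  have u': "u' \<in> carrier S" and \<Phi>': "\<Phi>' \<in> lin_dual K S" using pq qq by auto
  show "F (p \<otimes>\<^bsub>TS\<^esub> q) = F p \<otimes>\<^bsub>ST\<^esub> F q" unfolding pp qq by (rule F_mult[OF u \<Phi> u' \<Phi>'])
  show "F (p \<oplus>\<^bsub>TS\<^esub> q) = F p \<oplus>\<^bsub>ST\<^esub> F q" unfolding pp qq by (rule F_add[OF u \<Phi> u' \<Phi>'])
next
  show "F \<one>\<^bsub>TS\<^esub> = \<one>\<^bsub>ST\<^esub>" by (rule F_one)
  show "bij_betw F (carrier TS) (carrier ST)"
    unfolding bij_betw_def using F_inj F_surj F_closed' by (auto simp del: ST_simps triv_simps)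
  fix t p assume t: "t \<in> carrier K" and p: "p \<in> carrier TS"
  obtain u \<Phi> where pp: "p = (u, \<Phi>)" by (cases p)
  have u: "u \<in> carrier S" and \<Phi>: "\<Phi> \<in> lin_dual K S" using p pp by auto
  show "F (t \<odot>\<^bsub>TS\<^esub> p) = t \<odot>\<^bsub>ST\<^esub> F p" unfolding pp by (rule F_smult[OF t u \<Phi>])
qed

end



theorem proposition1p4:
  fixes K :: "'k ring" and G :: "'g monoid" and L :: "('k, 'a) module"
    and act :: "'g \<Rightarrow> 'a \<Rightarrow> 'a"
  assumes "algebraically_closed K"
    and "comm_group G" and "finite (carrier G)"
    and "[card (carrier G)] \<cdot>\<^bsub>K\<^esub> \<one>\<^bsub>K\<^esub> \<in> Units K"
    and "k_algebra K L" and "fin_dim K L"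
    and "alg_action K G L act"
  shows "alg_isomorphic K (triv_ext K (skew_group_alg G L act))
           (skew_group_alg G (triv_ext K L) (triv_action G L act))"
proof -
  have alg: "field K" "module K L" "ring L"
    and b: "\<forall>c\<in>carrier K. \<forall>x\<in>carrier L. \<forall>y\<in>carrier L.
        (c \<odot>\<^bsub>L\<^esub> x) \<otimes>\<^bsub>L\<^esub> y = c \<odot>\<^bsub>L\<^esub> (x \<otimes>\<^bsub>L\<^esub> y) \<and>
        x \<otimes>\<^bsub>L\<^esub> (c \<odot>\<^bsub>L\<^esub> y) = c \<odot>\<^bsub>L\<^esub> (x \<otimes>\<^bsub>L\<^esub> y)"
    using assms(5) unfolding k_algebra_def by auto
  have grp: "group G" using assms(2) by (rule comm_group.axioms(2))
  interpret tsetup K L G act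
  proof (intro tsetup.intro tsetup_axioms.intro)
    show "field K" "module K L" "ring L" "group G" by (fact alg grp)+
    show "finite (carrier G)" by (fact assms(3))
    show "alg_action K G L act" by (fact assms(7))
  qed (use b in auto)
  show ?thesis unfolding alg_isomorphic_def using F_iso by blast
qed



end
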